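(* Let $\nu\in\mathcal P_s$ with $\nu(\{0\})=0$. For every $n\in\mathbb N$, every $x\in\mathbb R$ and every $t>0$ with $\nu(\{t\})=0$, $$\big(\delta_x\vartriangle_\alpha\nu^{\vartriangle_\alpha n}\big)\big((0,t)\big)=\tfrac12\Big[\Psi\big(\tfrac{x}{t}\big)H_n(t)+G(t)^n\Big]\mathbf 1_{\{|x|<t\}},$$ where $H_n(t)=2F_n(t)-1-G(t)^n$ and $F_n(t)=\nu^{\vartriangle_\alpha n}((-\infty,t])$. In particular, for the Kendall random walk with step distribution $\nu$, $P_n(x,(0,t))$ equals the right-hand side.
   Context: Fix $\alpha>0$. $\mathcal P_s$ is the set of symmetric Borel probability measures on $\mathbb R$. For $x\in\mathbb R$, $\widetilde\delta_x=\frac12(\delta_x+\delta_{-x})$. For a probability measure $\lambda=\mathcal L(X)$ and $c>0$, $T_c\lambda=\mathcal L(cX)$, and $T_0\lambda=\delta_0$. $\widetilde\pi_{2\alpha}$ is the symmetric Pareto probability measure with density $\alpha|y|^{-2\alpha-1}\mathbf 1_{\{|y|\ge1\}}$. The Kendall convolution $\vartriangle_\alpha$ on $\mathcal P_s$ is defined by $\widetilde\delta_x\vartriangle_\alpha\widetilde\delta_y=T_M\big(\varrho^\alpha\widetilde\pi_{2\alpha}+(1-\varrho^\alpha)\widetilde\delta_1\big)$ where $M=\max(|x|,|y|)$, $m=\min(|x|,|y|)$, $\varrho=m/M$ (and $\varrho=0$ if $M=0$), extended by $(\nu_1\vartriangle_\alpha\nu_2)(A)=\int\int(\widetilde\delta_x\vartriangle_\alpha\widetilde\delta_y)(A)\,\nu_1(dx)\nu_2(dy)$;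 $\nu^{\vartriangle_\alpha n}$ is the $n$-fold convolution power. For $x\in\mathbb R$ and $\mu\in\mathcal P_s$ we write $\delta_x\vartriangle_\alpha\mu:=\widetilde\delta_x\vartriangle_\alpha\mu$. $\Psi(t)=(1-|t|^\alpha)_+$. For the measure $\nu$: $F(t)=\nu((-\infty,t])$, and $G(t)=\int_{\mathbb R}\Psi(x/t)\,\nu(dx)$ for $t\neq0$. The Kendall random walk with step distribution $\nu$ is the Markov chain $(X_n)_{n\ge0}$ with $X_0=0$ and transition probabilities $P_n(x,A)=\mathbb P(X_{k+n}\in A\mid X_k=x)=(\delta_x\vartriangle_\alpha\nu^{\vartriangle_\alpha n})(A)$. *)

theory Defs
  imports "HOL-Probability.Probability"
begin

definition sym_prob :: "real measure \<Rightarrow> bool" where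
  "sym_prob \<nu> \<longleftrightarrow> prob_space \<nu> \<and> sets \<nu> = sets borel \<and>
     (\<forall>A\<in>sets borel. emeasure \<nu> (uminus ` A) = emeasure \<nu> A)"

definition tdelta :: "real \<Rightarrow> real measure" where
  "tdelta x = measure_of UNIV (sets borel)
     (\<lambda>A. ennreal ((indicator A x + indicator A (-x)) / 2))"

definition sym_pareto :: "real \<Rightarrow> real measure" where
  "sym_pareto \<alpha> = density lborel
     (\<lambda>y. ennreal (\<alpha> * \<bar>y\<bar> powr (-2*\<alpha> - 1)) * indicator {y. \<bar>y\<bar> \<ge> 1} y)"

definition dil :: "real \<Rightarrow> real measure \<Rightarrow> real measure" where
  "dil c \<mu> = distr \<mu> borel (\<lambda>z. c * z)"

text \<open>The Kendall convolution of two symmetrized Dirac measures, evaluated on a set A: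
  T_M (rho^alpha pi_{2 alpha} + (1 - rho^alpha) tdelta 1) (A).\<close>
definition kbase :: "real \<Rightarrow> real \<Rightarrow> real \<Rightarrow> real set \<Rightarrow> real" where
  "kbase \<alpha> x y A =
    (let M = max \<bar>x\<bar> \<bar>y\<bar>; m = min \<bar>x\<bar> \<bar>y\<bar>;
         \<rho> = (if M = 0 then 0 else m / M)
     in \<rho> powr \<alpha> * measure (dil M (sym_pareto \<alpha>)) A
        + (1 - \<rho> powr \<alpha>) * measure (dil M (tdelta 1)) A)"

definition kconv :: "real \<Rightarrow> real measure \<Rightarrow> real measure \<Rightarrow> real measure" where
  "kconv \<alpha> \<nu>1 \<nu>2 = measure_of UNIV (sets borel)
     (\<lambda>A. \<integral>\<^sup>+ x. \<integral>\<^sup>+ y. ennreal (kbase \<alpha> x y A) \<partial>\<nu>2 \<partial>\<nu>1)"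

fun kpow :: "real \<Rightarrow> real measure \<Rightarrow> nat \<Rightarrow> real measure" where
  "kpow \<alpha> \<nu> 0 = tdelta 0"
| "kpow \<alpha> \<nu> (Suc n) = kconv \<alpha> (kpow \<alpha> \<nu> n) \<nu>"

definition Psi :: "real \<Rightarrow> real \<Rightarrow> real" where
  "Psi \<alpha> t = max 0 (1 - \<bar>t\<bar> powr \<alpha>)"

definition Fdist :: "real measure \<Rightarrow> real \<Rightarrow> real" where
  "Fdist \<nu> t = measure \<nu> {..t}"

definition Gfun :: "real \<Rightarrow> real measure \<Rightarrow> real \<Rightarrow> real" where
  "Gfun \<alpha> \<nu> t = (\<integral> x. Psi \<alpha> (x / t) \<partial>\<nu>)"

definition Hfun :: "real \<Rightarrow> real measure \<Rightarrow> nat \<Rightarrow> real \<Rightarrow> real" where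
  "Hfun \<alpha> \<nu> n t = 2 * Fdist (kpow \<alpha> \<nu> n) t - 1 - Gfun \<alpha> \<nu> t ^ n"

definition kendall_trans :: "real \<Rightarrow> real measure \<Rightarrow> nat \<Rightarrow> real \<Rightarrow> real set \<Rightarrow> real" where
  "kendall_trans \<alpha> \<nu> n x A = measure (kconv \<alpha> (tdelta x) (kpow \<alpha> \<nu> n)) A"

end

theory Submission
  imports Defs
begin

lemma measure_of_borel_eq:
  fixes N :: "real measure"
  assumes "sets N = sets borel" "\<And>A. A \<in> sets borel \<Longrightarrow> f A = emeasure N A"
  shows "measure_of UNIV (sets borel) f = N"
proof -
  have sp: "space N = UNIV" using sets_eq_imp_space_eq[OF assms(1)] by simp
  have "measure_of UNIV (sets borel) f = measure_of UNIV (sets borel) (emeasure N)"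
  proof (rule measure_of_eq)
    fix a :: "real set" assume "a \<in> sigma_sets UNIV (sets borel)"
    then have "a \<in> sets borel" using sets.sigma_sets_eq[of "borel::real measure"] by simp
    then show "f a = emeasure N a" by (rule assms(2))
  qed simp
  also have "\<dots> = N" using measure_of_of_measure[of N] sp assms(1) by simp
  finally show ?thesis .
qed

definition T :: "real \<Rightarrow> real measure" where
  "T x = distr (measure_pmf (bernoulli_pmf (1/2))) borel (\<lambda>b. if b then x else -x)"

lemma sets_T[simp, measurable_cong]: "sets (T x) = sets borel"
  by (simp add: T_def)

lemma prob_T: "prob_space (T x)"
  unfolding T_def by (rule prob_space.prob_space_distr) (auto simp: prob_space_measure_pmf)

lemma nn_integral_T: "f \<in> borel_measurable borel \<Longrightarrow> (\<integral>\<^sup>+z. f z \<partial>T x) = (f x + f (-x)) / 2"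
  unfolding T_def
  apply (subst nn_integral_distr) apply simp apply simp
  apply (subst nn_integral_measure_pmf_support[of UNIV]) 
  apply (auto simp: UNIV_bool divide_ennreal_def algebra_simps)
  done

lemma two_inv_ennreal[simp]: "(2::ennreal) * inverse 2 = 1"
  using ennreal_divide_self[of "2::ennreal"] by (simp add: divide_ennreal_def)

lemma emeasure_T: "A \<in> sets borel \<Longrightarrow> emeasure (T x) A = ennreal ((indicator A x + indicator A (-x)) / 2)"
  apply (subst nn_integral_indicator[symmetric]) apply simp
  apply (subst nn_integral_T) apply simp
  apply (auto split: split_indicator simp: divide_ennreal_def ennreal_mult[symmetric])
  done

lemma tdelta_T: "tdelta x = T x"
  unfolding tdelta_def by (rule measure_of_borel_eq) (auto simp: emeasure_T)

lemma sets_pareto[simp, measurable_cong]: "sets (sym_pareto a) = sets borel"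
  by (simp add: sym_pareto_def)

lemma nn_integral_pareto:
  assumes [measurable]: "f \<in> borel_measurable borel"
  shows "(\<integral>\<^sup>+z. f z \<partial>sym_pareto a) =
    (\<integral>\<^sup>+z. ennreal (a * z powr (-2*a-1)) * indicator {1..} z * (f z + f (-z)) \<partial>lborel)"
proof -
  let ?h1 = "\<lambda>z. ennreal (a * z powr (-2*a-1)) * indicator {1..} z * f z"
  let ?h2 = "\<lambda>z. ennreal (a * \<bar>z\<bar> powr (-2*a-1)) * indicator {..-1} z * f z"
  have "(\<integral>\<^sup>+z. f z \<partial>sym_pareto a) =
     (\<integral>\<^sup>+z. ennreal (a * \<bar>z\<bar> powr (-2*a-1)) * indicator {y. \<bar>y\<bar> \<ge> 1} z * f z \<partial>lborel)"
    unfolding sym_pareto_def by (subst nn_integral_density) auto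
  also have "\<dots> = (\<integral>\<^sup>+z. ?h1 z + ?h2 z \<partial>lborel)"
    by (intro nn_integral_cong) (auto split: split_indicator simp: distrib_right)
  also have "\<dots> = (\<integral>\<^sup>+z. ?h1 z \<partial>lborel) + (\<integral>\<^sup>+z. ?h2 z \<partial>lborel)"
    by (rule nn_integral_add) auto
  also have "(\<integral>\<^sup>+z. ?h2 z \<partial>lborel) = (\<integral>\<^sup>+z. ?h2 (0 + (-1) * z) \<partial>lborel)"
    using nn_integral_real_affine[of ?h2 "-1" 0] by simp
  also have "\<dots> = (\<integral>\<^sup>+z. ennreal (a * z powr (-2*a-1)) * indicator {1..} z * f (-z) \<partial>lborel)"
    by (intro nn_integral_cong) (auto split: split_indicator)
  also have "(\<integral>\<^sup>+z. ?h1 z \<partial>lborel) + \<dots> =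
     (\<integral>\<^sup>+z. ?h1 z + ennreal (a * z powr (-2*a-1)) * indicator {1..} z * f (-z) \<partial>lborel)"
    by (rule nn_integral_add[symmetric]) auto
  also have "\<dots> = (\<integral>\<^sup>+z. ennreal (a * z powr (-2*a-1)) * indicator {1..} z * (f z + f (-z)) \<partial>lborel)"
    by (intro nn_integral_cong) (simp add: distrib_left)
  finally show ?thesis .
qed

lemma pareto_half:
  assumes a: "a > 0"
  shows "(\<integral>\<^sup>+z. ennreal (a * z powr (-2*a-1)) * indicator {1..} z \<partial>lborel) = ennreal (1/2)"
proof -
  have "(\<integral>\<^sup>+z. ennreal (a * z powr (-2*a-1)) * indicator {1..} z \<partial>lborel) = ennreal (0 - (- (1 powr (-2*a) / 2)))"
  proof (rule nn_integral_FTC_atLeast)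
    show "(\<lambda>z. a * z powr (-2*a-1)) \<in> borel_measurable borel" by measurable
    fix x :: real assume "1 \<le> x"
    then have x: "x > 0" by simp
    show "0 \<le> a * x powr (-2*a-1)" using a by simp
    show "((\<lambda>z. - (z powr (-2*a) / 2)) has_real_derivative a * x powr (-2*a-1)) (at x)"
      using has_real_derivative_powr[OF x, of "-2*a"] x
      by (auto intro!: derivative_eq_intros simp: field_simps)
  next
    have l: "((\<lambda>z. z powr (-2*a)) \<longlongrightarrow> 0) at_top"
      using tendsto_neg_powr[of "-2*a" "\<lambda>x. x" at_top] a filterlim_ident by auto
    have "((\<lambda>z. - (z powr (-2*a) / 2)) \<longlongrightarrow> - (0/2)) at_top"
      using tendsto_minus[OF tendsto_divide[OF l tendsto_const, of 2]] by simp
    then show "((\<lambda>z. - (z powr (-2*a) / 2)) \<longlongrightarrow> 0) at_top" by simp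
  qed
  then show ?thesis by simp
qed

lemma prob_pareto:
  assumes a: "a > 0"
  shows "prob_space (sym_pareto a)"
proof
  have "emeasure (sym_pareto a) UNIV = (\<integral>\<^sup>+z. indicator UNIV z \<partial>sym_pareto a)"
    by (subst nn_integral_indicator) auto
  also have "\<dots> = (\<integral>\<^sup>+z. ennreal (a * z powr (-2*a-1)) * indicator {1..} z * 2 \<partial>lborel)"
    by (subst nn_integral_pareto) (auto simp: one_add_one)
  also have "\<dots> = (\<integral>\<^sup>+z. ennreal (a * z powr (-2*a-1)) * indicator {1..} z \<partial>lborel) * 2"
    by (rule nn_integral_multc) auto
  also have "\<dots> = ennreal (1/2) * 2"
    by (simp only: pareto_half[OF a])
  also have "\<dots> = 1"
  proof -
    have "ennreal (1/2) * ennreal 2 = ennreal 1" by (subst ennreal_mult[symmetric]) auto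
    then show ?thesis by simp
  qed
  finally show "emeasure (sym_pareto a) (space (sym_pareto a)) = 1"
    using sets_eq_imp_space_eq[OF sets_pareto[of a]] by simp
qed

lemma measure_T: "A \<in> sets borel \<Longrightarrow> measure (T x) A = (indicator A x + indicator A (-x)) / 2"
  unfolding measure_def by (subst emeasure_T) auto

lemma sets_dil[simp, measurable_cong]: "sets (dil c N) = sets borel"
  by (simp add: dil_def)

lemma meas_mult_N: "sets N = sets borel \<Longrightarrow> (\<lambda>z::real. c * z) \<in> measurable N borel"
proof -
  assume a: "sets N = sets borel"
  have "(\<lambda>z::real. c * z) \<in> borel_measurable borel" by measurable
  then show ?thesis using measurable_cong_sets[OF a refl, of borel] by blast
qed

lemma nn_integral_dil:
  assumes "f \<in> borel_measurable borel" "sets N = sets borel"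
  shows "(\<integral>\<^sup>+z. f z \<partial>dil c N) = (\<integral>\<^sup>+z. f (c * z) \<partial>N)"
proof -
  have m: "(\<lambda>z. c * z) \<in> measurable N borel" using assms(2) by (rule meas_mult_N)
  show ?thesis unfolding dil_def using assms by (subst nn_integral_distr[OF m]) auto
qed

lemma measure_dil:
  assumes "A \<in> sets borel" "sets N = sets borel"
  shows "measure (dil c N) A = measure N {z. c * z \<in> A}"
proof -
  have "space N = UNIV" using sets_eq_imp_space_eq[OF assms(2)] by simp
  have m: "(\<lambda>z. c * z) \<in> measurable N borel" using assms(2) by (rule meas_mult_N)
  show ?thesis unfolding dil_def using assms \<open>space N = UNIV\<close>
    by (subst measure_distr[OF m]) (auto simp: vimage_def)
qed

lemma prob_dil: "prob_space N \<Longrightarrow> sets N = sets borel \<Longrightarrow> prob_space (dil c N)"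
  unfolding dil_def by (intro prob_space.prob_space_distr meas_mult_N)

lemma measure_dil_T: "A \<in> sets borel \<Longrightarrow> measure (dil c (T 1)) A = (indicator A c + indicator A (-c)) / 2"
proof -
  assume [measurable]: "A \<in> sets borel"
  have "{z. c * z \<in> A} \<in> sets borel" by measurable
  then show ?thesis by (simp add: measure_dil measure_T split: split_indicator)
qed

lemma measurable_measure_dil_pareto:
  assumes a: "a > 0" and [measurable]: "A \<in> sets borel"
  shows "(\<lambda>m. measure (dil m (sym_pareto a)) A) \<in> borel_measurable borel"
proof -
  interpret P: prob_space "sym_pareto a" using prob_pareto[OF a] .
  have sp: "space (sym_pareto a) = UNIV" using sets_eq_imp_space_eq[OF sets_pareto[of a]] by simp
  define Q where "Q = {p \<in> space (borel \<Otimes>\<^sub>M sym_pareto a). fst p * snd p \<in> A}"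
  have Q: "Q \<in> sets (borel \<Otimes>\<^sub>M sym_pareto a)" unfolding Q_def by measurable
  have eq: "Pair m -` Q = {z. m * z \<in> A}" for m
    unfolding Q_def by (auto simp: space_pair_measure sp)
  have "(\<lambda>m. emeasure (sym_pareto a) (Pair m -` Q)) \<in> borel_measurable borel"
    by (rule P.measurable_emeasure_Pair[OF Q])
  then have "(\<lambda>m. enn2real (emeasure (sym_pareto a) (Pair m -` Q))) \<in> borel_measurable borel"
    by measurable
  moreover have "measure (dil m (sym_pareto a)) A = enn2real (emeasure (sym_pareto a) (Pair m -` Q))" for m
    by (subst measure_dil) (auto simp: eq measure_def)
  ultimately show ?thesis by simp
qed

definition kM :: "real \<Rightarrow> real \<Rightarrow> real" where "kM x y = max \<bar>x\<bar> \<bar>y\<bar>"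
definition kr :: "real \<Rightarrow> real \<Rightarrow> real \<Rightarrow> real" where
  "kr a x y = (if kM x y = 0 then 0 else min \<bar>x\<bar> \<bar>y\<bar> / kM x y) powr a"

lemma kbase_alt: "kbase a x y A = kr a x y * measure (dil (kM x y) (sym_pareto a)) A
   + (1 - kr a x y) * measure (dil (kM x y) (tdelta 1)) A"
  unfolding kbase_def kM_def kr_def Let_def by (cases "max \<bar>x\<bar> \<bar>y\<bar> = 0") auto

lemma kr_bounds: assumes "a > 0" shows "0 \<le> kr a x y" "kr a x y \<le> 1"
  unfolding kr_def kM_def using assms by (auto intro!: powr_le1 simp: divide_le_eq_1)

lemma kM_nonneg: "0 \<le> kM x y" by (simp add: kM_def)

definition K :: "real \<Rightarrow> real \<Rightarrow> real \<Rightarrow> real measure" where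
  "K a x y = measure_pmf (bernoulli_pmf (kr a x y)) \<bind>
     (\<lambda>b. if b then dil (kM x y) (sym_pareto a) else dil (kM x y) (T 1))"

lemma K_meas_aux:
  assumes "a > 0"
  shows "(\<lambda>b. if b then dil m (sym_pareto a) else dil m (T 1)) \<in> measurable (measure_pmf p) (subprob_algebra borel)"
  using assms by (auto simp: space_subprob_algebra split: if_splits intro!: prob_space_imp_subprob_space prob_dil prob_pareto prob_T)

lemma sets_K[simp, measurable_cong]: "a > 0 \<Longrightarrow> sets (K a x y) = sets borel"
  unfolding K_def by (subst sets_bind) auto

lemma nn_integral_K:
  assumes a: "a > 0" and f[measurable]: "f \<in> borel_measurable borel"
  shows "(\<integral>\<^sup>+z. f z \<partial>K a x y) = ennreal (kr a x y) * (\<integral>\<^sup>+z. f (kM x y * z) \<partial>sym_pareto a)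
     + ennreal (1 - kr a x y) * ((f (kM x y) + f (- kM x y)) / 2)"
  unfolding K_def
  apply (subst nn_integral_bind[OF f K_meas_aux[OF a]])
  apply (subst nn_integral_measure_pmf_support[of UNIV])
  using kr_bounds[OF a, of x y]
  apply (auto simp: UNIV_bool nn_integral_dil nn_integral_T algebra_simps)
  done

lemma emeasure_K:
  assumes a: "a > 0" and A[measurable]: "A \<in> sets borel"
  shows "emeasure (K a x y) A = ennreal (kbase a x y A)"
proof -
  interpret P: prob_space "sym_pareto a" by (rule prob_pareto[OF a])
  let ?M = "kM x y" and ?r = "kr a x y"
  have r: "0 \<le> ?r" "?r \<le> 1" using kr_bounds[OF a] by auto
  have S: "{z. ?M * z \<in> A} \<in> sets borel" by measurable
  have "emeasure (K a x y) A = (\<integral>\<^sup>+z. indicator A z \<partial>K a x y)"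
    using sets_K[OF a] by (subst nn_integral_indicator) auto
  also have "\<dots> = ennreal ?r * (\<integral>\<^sup>+z. indicator A (?M * z) \<partial>sym_pareto a)
     + ennreal (1 - ?r) * ((indicator A ?M + indicator A (- ?M)) / 2)"
    by (rule nn_integral_K[OF a]) measurable
  also have "(\<integral>\<^sup>+z. indicator A (?M * z) \<partial>sym_pareto a) = (\<integral>\<^sup>+z. indicator {z. ?M * z \<in> A} z \<partial>sym_pareto a)"
    by (intro nn_integral_cong) (auto split: split_indicator)
  also have "\<dots> = emeasure (sym_pareto a) {z. ?M * z \<in> A}"
    using S by (subst nn_integral_indicator) auto
  also have "\<dots> = ennreal (measure (dil ?M (sym_pareto a)) A)"
    using S by (simp add: measure_dil P.emeasure_eq_measure)
  also have "((indicator A ?M + indicator A (- ?M)) / 2 :: ennreal) = ennreal (measure (dil ?M (tdelta 1)) A)"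
  proof -
    have "((indicator A ?M + indicator A (- ?M)) / 2 :: ennreal)
       = (ennreal (indicator A ?M) + ennreal (indicator A (- ?M))) / ennreal 2"
      by (simp add: ennreal_indicator)
    also have "\<dots> = ennreal (indicator A ?M + indicator A (- ?M)) / ennreal 2"
      by (subst ennreal_plus) auto
    also have "\<dots> = ennreal ((indicator A ?M + indicator A (- ?M)) / 2)"
      by (rule divide_ennreal) auto
    finally show ?thesis by (simp only: tdelta_T measure_dil_T[OF A])
  qed
  also have "ennreal ?r * ennreal (measure (dil ?M (sym_pareto a)) A) + ennreal (1 - ?r) * ennreal (measure (dil ?M (tdelta 1)) A)
     = ennreal (kbase a x y A)"
  proof -
    have p: "0 \<le> measure (dil ?M (sym_pareto a)) A" "0 \<le> measure (dil ?M (tdelta 1)) A"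
      by (rule measure_nonneg)+
    have "ennreal (kbase a x y A) = ennreal (?r * measure (dil ?M (sym_pareto a)) A) + ennreal ((1 - ?r) * measure (dil ?M (tdelta 1)) A)"
      unfolding kbase_alt by (rule ennreal_plus) (use r p in auto)
    also have "\<dots> = ennreal ?r * ennreal (measure (dil ?M (sym_pareto a)) A) + ennreal (1 - ?r) * ennreal (measure (dil ?M (tdelta 1)) A)"
      using r p by (simp add: ennreal_mult)
    finally show ?thesis by simp
  qed
  finally show ?thesis .
qed

lemma prob_K: assumes a: "a > 0" shows "prob_space (K a x y)"
proof
  interpret P: prob_space "dil (kM x y) (sym_pareto a)" by (intro prob_dil prob_pareto a) simp
  interpret Q: prob_space "dil (kM x y) (T 1)" by (intro prob_dil prob_T) simp
  have sp: "space (K a x y) = UNIV" using sets_eq_imp_space_eq[OF sets_K[OF a]] by simp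
  have "emeasure (K a x y) UNIV = ennreal (kbase a x y UNIV)" by (rule emeasure_K[OF a]) simp
  also have "\<dots> = 1"
  proof -
    have "space (dil (kM x y) (sym_pareto a)) = UNIV" "space (dil (kM x y) (T 1)) = UNIV"
      using sets_eq_imp_space_eq[OF sets_dil] by auto
    then have "measure (dil (kM x y) (sym_pareto a)) UNIV = 1" "measure (dil (kM x y) (T 1)) UNIV = 1"
      using P.prob_space Q.prob_space by metis+
    then show ?thesis by (simp add: kbase_alt tdelta_T)
  qed
  finally show "emeasure (K a x y) (space (K a x y)) = 1" using sp by simp
qed

lemma measurable_kbase:
  assumes a: "a > 0" and A[measurable]: "A \<in> sets borel"
  shows "(\<lambda>p. kbase a (fst p) (snd p) A) \<in> borel_measurable (borel \<Otimes>\<^sub>M borel)"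
proof -
  have m1: "(\<lambda>p. kM (fst p) (snd p)) \<in> borel_measurable (borel \<Otimes>\<^sub>M borel)"
    unfolding kM_def by measurable
  have m2: "(\<lambda>p. kr a (fst p) (snd p)) \<in> borel_measurable (borel \<Otimes>\<^sub>M borel)"
    unfolding kr_def kM_def by measurable
  have m3: "(\<lambda>p. measure (dil (kM (fst p) (snd p)) (sym_pareto a)) A) \<in> borel_measurable (borel \<Otimes>\<^sub>M borel)"
    using measurable_compose[OF m1 measurable_measure_dil_pareto[OF a A]] by simp
  have m4: "(\<lambda>p. measure (dil (kM (fst p) (snd p)) (tdelta 1)) A) \<in> borel_measurable (borel \<Otimes>\<^sub>M borel)"
    unfolding tdelta_T measure_dil_T[OF A] using m1 by measurable
  show ?thesis unfolding kbase_alt using m2 m3 m4 by measurable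
qed

lemma K_measurable:
  assumes a: "a > 0"
  shows "(\<lambda>p. K a (fst p) (snd p)) \<in> measurable (borel \<Otimes>\<^sub>M borel) (subprob_algebra borel)"
proof (rule measurable_subprob_algebra)
  fix p show "subprob_space (K a (fst p) (snd p))" by (rule prob_space_imp_subprob_space, rule prob_K[OF a])
  show "sets (K a (fst p) (snd p)) = sets borel" by (rule sets_K[OF a])
next
  fix A :: "real set" assume A: "A \<in> sets borel"
  show "(\<lambda>p. emeasure (K a (fst p) (snd p)) A) \<in> borel_measurable (borel \<Otimes>\<^sub>M borel)"
    using measurable_kbase[OF a A] by (simp add: emeasure_K[OF a A])
qed

definition good :: "real measure \<Rightarrow> bool" where
  "good \<mu> \<longleftrightarrow> prob_space \<mu> \<and> sets \<mu> = sets borel"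

lemma good_T: "good (T x)" by (simp add: good_def prob_T)

lemma K_measurable':
  assumes a: "a > 0" and g: "good \<mu>1" "good \<mu>2"
  shows "(\<lambda>p. K a (fst p) (snd p)) \<in> measurable (\<mu>1 \<Otimes>\<^sub>M \<mu>2) (subprob_algebra borel)"
proof -
  have "sets (\<mu>1 \<Otimes>\<^sub>M \<mu>2) = sets (borel \<Otimes>\<^sub>M borel)"
    using g by (intro sets_pair_measure_cong) (auto simp: good_def)
  then show ?thesis using K_measurable[OF a] measurable_cong_sets by blast
qed

lemma space_good: "good \<mu> \<Longrightarrow> space \<mu> = UNIV"
  unfolding good_def using sets_eq_imp_space_eq[of \<mu> borel] by auto

lemma kconv_bind:
  assumes a: "a > 0" and g: "good \<mu>1" "good \<mu>2"
  shows "kconv a \<mu>1 \<mu>2 = (\<mu>1 \<Otimes>\<^sub>M \<mu>2) \<bind> (\<lambda>p. K a (fst p) (snd p))"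
proof -
  interpret P2: prob_space \<mu>2 using g by (simp add: good_def)
  note Km = K_measurable'[OF a g]
  have ne: "space (\<mu>1 \<Otimes>\<^sub>M \<mu>2) \<noteq> {}" using g by (simp add: space_pair_measure space_good)
  have sp2: "sets (\<mu>1 \<Otimes>\<^sub>M \<mu>2) = sets (borel \<Otimes>\<^sub>M borel)"
    using g by (intro sets_pair_measure_cong) (auto simp: good_def)
  show ?thesis unfolding kconv_def
  proof (rule measure_of_borel_eq)
    show "sets ((\<mu>1 \<Otimes>\<^sub>M \<mu>2) \<bind> (\<lambda>p. K a (fst p) (snd p))) = sets borel"
      using ne by (subst sets_bind) (auto simp: sets_K[OF a])
  next
    fix A :: "real set" assume A: "A \<in> sets borel"
    have m: "(\<lambda>p. emeasure (K a (fst p) (snd p)) A) \<in> borel_measurable (\<mu>1 \<Otimes>\<^sub>M \<mu>2)"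
      using measurable_emeasure_kernel[OF Km A] .
    have "emeasure ((\<mu>1 \<Otimes>\<^sub>M \<mu>2) \<bind> (\<lambda>p. K a (fst p) (snd p))) A
       = (\<integral>\<^sup>+p. emeasure (K a (fst p) (snd p)) A \<partial>(\<mu>1 \<Otimes>\<^sub>M \<mu>2))"
      by (rule emeasure_bind[OF ne Km A])
    also have "\<dots> = (\<integral>\<^sup>+x. \<integral>\<^sup>+y. emeasure (K a x y) A \<partial>\<mu>2 \<partial>\<mu>1)"
      using P2.nn_integral_fst[OF m] by simp
    also have "\<dots> = (\<integral>\<^sup>+x. \<integral>\<^sup>+y. ennreal (kbase a x y A) \<partial>\<mu>2 \<partial>\<mu>1)"
      by (simp add: emeasure_K[OF a A])
    finally show "(\<integral>\<^sup>+x. \<integral>\<^sup>+y. ennreal (kbase a x y A) \<partial>\<mu>2 \<partial>\<mu>1) =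
      emeasure ((\<mu>1 \<Otimes>\<^sub>M \<mu>2) \<bind> (\<lambda>p. K a (fst p) (snd p))) A" by simp
  qed
qed

lemma nn_integral_kconv:
  assumes a: "a > 0" and g: "good \<mu>1" "good \<mu>2" and f[measurable]: "f \<in> borel_measurable borel"
  shows "(\<integral>\<^sup>+z. f z \<partial>kconv a \<mu>1 \<mu>2) = (\<integral>\<^sup>+x. \<integral>\<^sup>+y. \<integral>\<^sup>+z. f z \<partial>K a x y \<partial>\<mu>2 \<partial>\<mu>1)"
proof -
  interpret P2: prob_space \<mu>2 using g by (simp add: good_def)
  note Km = K_measurable'[OF a g]
  have m: "(\<lambda>p. \<integral>\<^sup>+z. f z \<partial>K a (fst p) (snd p)) \<in> borel_measurable (\<mu>1 \<Otimes>\<^sub>M \<mu>2)"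
    using measurable_compose[OF Km nn_integral_measurable_subprob_algebra[OF f]] by simp
  show ?thesis
    unfolding kconv_bind[OF a g]
    apply (subst nn_integral_bind[OF f Km])
    using P2.nn_integral_fst[OF m] by simp
qed

lemma good_kconv:
  assumes a: "a > 0" and g: "good \<mu>1" "good \<mu>2"
  shows "good (kconv a \<mu>1 \<mu>2)"
proof -
  interpret P1: prob_space \<mu>1 using g by (simp add: good_def)
  interpret P2: prob_space \<mu>2 using g by (simp add: good_def)
  have s: "sets (kconv a \<mu>1 \<mu>2) = sets borel" unfolding kconv_def
    using sets.sigma_sets_eq[of "borel::real measure"] by simp
  have "emeasure (kconv a \<mu>1 \<mu>2) UNIV = (\<integral>\<^sup>+z. 1 \<partial>kconv a \<mu>1 \<mu>2)"
    using sets_eq_imp_space_eq[OF s] by simp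
  also have "\<dots> = (\<integral>\<^sup>+x. \<integral>\<^sup>+y. \<integral>\<^sup>+z. 1 \<partial>K a x y \<partial>\<mu>2 \<partial>\<mu>1)"
    by (rule nn_integral_kconv[OF a g]) simp
  also have "\<dots> = 1"
    using prob_space.emeasure_space_1[OF prob_K[OF a]] P1.emeasure_space_1 P2.emeasure_space_1
    by simp
  finally have "emeasure (kconv a \<mu>1 \<mu>2) (space (kconv a \<mu>1 \<mu>2)) = 1"
    using sets_eq_imp_space_eq[OF s] by simp
  then show ?thesis unfolding good_def using s by (auto intro: prob_spaceI)
qed

lemma good_kpow: "a > 0 \<Longrightarrow> good \<nu> \<Longrightarrow> good (kpow a \<nu> n)"
  by (induction n) (auto simp: tdelta_T good_T good_kconv)

definition symm :: "real measure \<Rightarrow> bool" where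
  "symm \<mu> \<longleftrightarrow> (\<forall>f. f \<in> borel_measurable borel \<longrightarrow> (\<integral>\<^sup>+z. f (-z) \<partial>\<mu>) = (\<integral>\<^sup>+z. f z \<partial>\<mu>))"

lemma symm_T: "symm (T x)"
  unfolding symm_def by (auto simp: nn_integral_T add.commute)

lemma pareto_sym:
  assumes [measurable]: "f \<in> borel_measurable borel"
  shows "(\<integral>\<^sup>+z. f (-z) \<partial>sym_pareto a) = (\<integral>\<^sup>+z. f z \<partial>sym_pareto a)"
  by (subst nn_integral_pareto, measurable, subst nn_integral_pareto, measurable)
     (simp add: add.commute)

lemma K_sym:
  assumes a: "a > 0" and [measurable]: "f \<in> borel_measurable borel"
  shows "(\<integral>\<^sup>+z. f (-z) \<partial>K a x y) = (\<integral>\<^sup>+z. f z \<partial>K a x y)"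
proof -
  have "(\<integral>\<^sup>+z. f (- (kM x y * z)) \<partial>sym_pareto a) = (\<integral>\<^sup>+z. f (kM x y * z) \<partial>sym_pareto a)"
    using pareto_sym[of "\<lambda>z. f (kM x y * z)" a] by simp
  then show ?thesis
    by (subst nn_integral_K[OF a], measurable, subst nn_integral_K[OF a], measurable)
       (simp add: add.commute)
qed

lemma symm_kconv:
  assumes a: "a > 0" and g: "good \<mu>1" "good \<mu>2"
  shows "symm (kconv a \<mu>1 \<mu>2)"
  unfolding symm_def
proof (intro allI impI)
  fix f :: "real \<Rightarrow> ennreal" assume [measurable]: "f \<in> borel_measurable borel"
  show "(\<integral>\<^sup>+z. f (-z) \<partial>kconv a \<mu>1 \<mu>2) = (\<integral>\<^sup>+z. f z \<partial>kconv a \<mu>1 \<mu>2)"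
    by (subst nn_integral_kconv[OF a g], measurable, subst nn_integral_kconv[OF a g], measurable)
       (simp add: K_sym[OF a])
qed

lemma symm_kpow: "a > 0 \<Longrightarrow> good \<nu> \<Longrightarrow> symm (kpow a \<nu> n)"
  by (cases n) (auto simp: tdelta_T symm_T symm_kconv good_kpow)

lemma pareto_atom: "emeasure (sym_pareto a) {p} = 0"
  unfolding sym_pareto_def by (subst emeasure_density) auto

lemma K_atom:
  assumes a: "a > 0" and s: "kM x y \<noteq> \<bar>s\<bar>"
  shows "emeasure (K a x y) {s} = 0"
proof -
  let ?M = "kM x y"
  have M0: "?M \<ge> 0" by (rule kM_nonneg)
  have "emeasure (K a x y) {s} = (\<integral>\<^sup>+z. indicator {s} z \<partial>K a x y)"
    using sets_K[OF a] by (subst nn_integral_indicator) auto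
  also have "\<dots> = ennreal (kr a x y) * (\<integral>\<^sup>+z. indicator {s} (?M * z) \<partial>sym_pareto a)
     + ennreal (1 - kr a x y) * ((indicator {s} ?M + indicator {s} (- ?M)) / 2)"
    by (rule nn_integral_K[OF a]) measurable
  also have "(indicator {s} ?M + indicator {s} (- ?M) :: ennreal) = 0"
    using s M0 by (auto split: split_indicator)
  also have "(\<integral>\<^sup>+z. indicator {s} (?M * z) \<partial>sym_pareto a) = 0"
  proof (cases "?M = 0")
    case True
    then have "s \<noteq> 0" using s by auto
    then show ?thesis using True by simp
  next
    case False
    have "(\<integral>\<^sup>+z. indicator {s} (?M * z) \<partial>sym_pareto a) = (\<integral>\<^sup>+z. indicator {s / ?M} z \<partial>sym_pareto a)"
      using False by (intro nn_integral_cong) (auto split: split_indicator simp: field_simps)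
    also have "\<dots> = 0" by (simp add: pareto_atom)
    finally show ?thesis .
  qed
  finally show ?thesis by simp
qed

lemma emeasure_kconv:
  assumes a: "a > 0" and g: "good \<mu>1" "good \<mu>2" and A: "A \<in> sets borel"
  shows "emeasure (kconv a \<mu>1 \<mu>2) A = (\<integral>\<^sup>+x. \<integral>\<^sup>+y. emeasure (K a x y) A \<partial>\<mu>2 \<partial>\<mu>1)"
proof -
  have s: "sets (kconv a \<mu>1 \<mu>2) = sets borel" using good_kconv[OF a g] by (simp add: good_def)
  have "emeasure (kconv a \<mu>1 \<mu>2) A = (\<integral>\<^sup>+z. indicator A z \<partial>kconv a \<mu>1 \<mu>2)"
    using s A by (subst nn_integral_indicator) auto
  also have "\<dots> = (\<integral>\<^sup>+x. \<integral>\<^sup>+y. \<integral>\<^sup>+z. indicator A z \<partial>K a x y \<partial>\<mu>2 \<partial>\<mu>1)"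
    by (rule nn_integral_kconv[OF a g]) (use A in measurable)
  also have "\<dots> = (\<integral>\<^sup>+x. \<integral>\<^sup>+y. emeasure (K a x y) A \<partial>\<mu>2 \<partial>\<mu>1)"
    using A sets_K[OF a] by (subst nn_integral_indicator) auto
  finally show ?thesis .
qed

lemma kconv_atom:
  assumes a: "a > 0" and g: "good \<mu>1" "good \<mu>2"
    and n1: "emeasure \<mu>1 {s, -s} = 0" and n2: "emeasure \<mu>2 {s, -s} = 0"
  shows "emeasure (kconv a \<mu>1 \<mu>2) {s} = 0"
proof -
  have ae1: "AE x in \<mu>1. x \<notin> {s, -s}"
    using g n1 by (intro AE_not_in) (auto simp: good_def null_sets_def)
  have ae2: "AE y in \<mu>2. y \<notin> {s, -s}"
    using g n2 by (intro AE_not_in) (auto simp: good_def null_sets_def)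
  have "(\<integral>\<^sup>+x. \<integral>\<^sup>+y. emeasure (K a x y) {s} \<partial>\<mu>2 \<partial>\<mu>1) = (\<integral>\<^sup>+x. 0 \<partial>\<mu>1)"
  proof (rule nn_integral_cong_AE)
    show "AE x in \<mu>1. (\<integral>\<^sup>+y. emeasure (K a x y) {s} \<partial>\<mu>2) = 0"
      using ae1
    proof eventually_elim
      case (elim x)
      have "(\<integral>\<^sup>+y. emeasure (K a x y) {s} \<partial>\<mu>2) = (\<integral>\<^sup>+y. 0 \<partial>\<mu>2)"
        using ae2
        by (intro nn_integral_cong_AE, eventually_elim)
           (use elim in \<open>auto intro!: K_atom[OF a] simp: kM_def abs_if max_def split: if_splits\<close>)
      then show ?case by simp
    qed
  qed
  then show ?thesis using emeasure_kconv[OF a g, of "{s}"] by simp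
qed

lemma kconv_atom0:
  assumes a: "a > 0" and g: "good \<mu>1" "good \<mu>2" and n2: "emeasure \<mu>2 {0} = 0"
  shows "emeasure (kconv a \<mu>1 \<mu>2) {0} = 0"
proof -
  have ae2: "AE y in \<mu>2. y \<notin> {0}"
    using g n2 by (intro AE_not_in) (auto simp: good_def null_sets_def)
  have "(\<integral>\<^sup>+x. \<integral>\<^sup>+y. emeasure (K a x y) {0} \<partial>\<mu>2 \<partial>\<mu>1) = (\<integral>\<^sup>+x. 0 \<partial>\<mu>1)"
  proof (rule nn_integral_cong)
    fix x
    show "(\<integral>\<^sup>+y. emeasure (K a x y) {0} \<partial>\<mu>2) = 0"
    proof -
      have "(\<integral>\<^sup>+y. emeasure (K a x y) {0} \<partial>\<mu>2) = (\<integral>\<^sup>+y. 0 \<partial>\<mu>2)"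
        using ae2
        by (intro nn_integral_cong_AE, eventually_elim)
           (auto intro!: K_atom[OF a] simp: kM_def)
      then show ?thesis by simp
    qed
  qed
  then show ?thesis using emeasure_kconv[OF a g, of "{0}"] by simp
qed

lemma Psi_nonneg: "0 \<le> Psi a u" by (simp add: Psi_def)
lemma Psi_le1: "0 \<le> a \<Longrightarrow> Psi a u \<le> 1" by (simp add: Psi_def)
lemma Psi_uminus[simp]: "Psi a (-u) = Psi a u" by (simp add: Psi_def)
lemma Psi_zero: "a > 0 \<Longrightarrow> Psi a 0 = 1" by (simp add: Psi_def)
lemma Psi_ge1: "a > 0 \<Longrightarrow> 1 \<le> \<bar>u\<bar> \<Longrightarrow> Psi a u = 0"
  unfolding Psi_def using ge_one_powr_ge_zero[of "\<bar>u\<bar>" a] by auto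
lemma Psi_le: "a > 0 \<Longrightarrow> \<bar>u\<bar> \<le> 1 \<Longrightarrow> Psi a u = 1 - \<bar>u\<bar> powr a"
  unfolding Psi_def using powr_le1[of a "\<bar>u\<bar>"] by auto

lemma Psi_measurable[measurable]: "(\<lambda>z. Psi a (f z)) \<in> borel_measurable M" if [measurable]: "f \<in> borel_measurable M"
  unfolding Psi_def by measurable

lemma ennreal_half2: "0 \<le> x \<Longrightarrow> ennreal (x/2) * 2 = ennreal x"
proof -
  assume x: "0 \<le> x"
  have "ennreal (x/2) * ennreal 2 = ennreal (x/2*2)" by (rule ennreal_mult[symmetric]) (use x in auto)
  then show ?thesis by simp
qed

lemma powr_zz: "z powr a * z powr (-2*a-1) = z powr (-a-1)" for z a :: real
proof -
  have "z powr a * z powr (-2*a-1) = z powr (a + (-2*a-1))" by (rule powr_add[symmetric])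
  also have "a + (-2*a-1) = -a-1" by simp
  finally show ?thesis .
qed

lemma pareto_psi:
  assumes a: "a > 0" and t: "t > 0" and M: "M > 0"
  shows "(\<integral>\<^sup>+z. ennreal (Psi a (M * z / t)) \<partial>sym_pareto a) = ennreal (if M < t then (1 - (M/t) powr a)^2 else 0)"
proof -
  let ?g = "\<lambda>z. a * z powr (-2*a-1)"
  have "(\<integral>\<^sup>+z. ennreal (Psi a (M * z / t)) \<partial>sym_pareto a)
      = (\<integral>\<^sup>+z. ennreal (?g z) * indicator {1..} z * (ennreal (Psi a (M * z / t)) + ennreal (Psi a (M * (-z) / t))) \<partial>lborel)"
    by (rule nn_integral_pareto) measurable
  also have "\<dots> = (\<integral>\<^sup>+z. ennreal (?g z * Psi a (M * z / t)) * indicator {1..} z * 2 \<partial>lborel)"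
  proof (intro nn_integral_cong)
    fix z :: real
    have "ennreal (Psi a (M * z / t)) + ennreal (Psi a (M * (-z) / t)) = ennreal (Psi a (M * z / t)) * 2"
      by (simp add: mult_2_right)
    then show "ennreal (?g z) * indicator {1..} z * (ennreal (Psi a (M * z / t)) + ennreal (Psi a (M * (-z) / t)))
       = ennreal (?g z * Psi a (M * z / t)) * indicator {1..} z * 2"
      using a by (simp add: ennreal_mult Psi_nonneg mult_ac)
  qed
  also have "\<dots> = (\<integral>\<^sup>+z. ennreal (?g z * Psi a (M * z / t)) * indicator {1..} z \<partial>lborel) * 2"
    by (rule nn_integral_multc) measurable
  also have "(\<integral>\<^sup>+z. ennreal (?g z * Psi a (M * z / t)) * indicator {1..} z \<partial>lborel)
     = ennreal (if M < t then (1 - (M/t) powr a)^2 / 2 else 0)"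
  proof (cases "M < t")
    case False
    have "(\<integral>\<^sup>+z. ennreal (?g z * Psi a (M * z / t)) * indicator {1..} z \<partial>lborel) = (\<integral>\<^sup>+(z::real). 0 \<partial>lborel)"
    proof (intro nn_integral_cong)
      fix z :: real
      show "ennreal (?g z * Psi a (M * z / t)) * indicator {1..} z = 0"
      proof (cases "z \<ge> 1")
        case True
        have "t \<le> M * z" using False True M by (metis mult_le_cancel_left1 not_le order_trans less_imp_le)
        then have "1 \<le> \<bar>M * z / t\<bar>" using t by simp
        then show ?thesis using Psi_ge1[OF a] by simp
      qed simp
    qed
    then show ?thesis using False by simp
  next
    case True
    define c where "c = t / M"
    define k where "k = (M/t) powr a"
    have c1: "1 < c" using True M unfolding c_def by simp
    let ?h = "\<lambda>z. a * z powr (-2*a-1) - a * k * z powr (-a-1)"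
    let ?F = "\<lambda>z. - (z powr (-2*a) / 2) + k * z powr (-a)"
    have eq: "ennreal (?g z * Psi a (M * z / t)) * indicator {1..} z = ennreal (?h z) * indicator {1..c} z" for z
    proof (cases "1 \<le> z \<and> z \<le> c")
      case True
      then have z: "0 < z" by simp
      have "M * z / t \<le> 1" using True M t unfolding c_def by (simp add: field_simps)
      moreover have "0 \<le> M * z / t" using z M t by simp
      ultimately have "Psi a (M * z / t) = 1 - (M * z / t) powr a" using Psi_le[OF a, of "M * z / t"] by (metis abs_of_nonneg)
      also have "(M * z / t) powr a = k * z powr a"
        unfolding k_def by (simp add: powr_mult[symmetric] field_simps)
      finally have ps: "Psi a (M * z / t) = 1 - k * z powr a" .
      have "z powr a * z powr (-2*a-1) = z powr (a + (-2*a-1))" by (rule powr_add[symmetric])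
      also have "a + (-2*a-1) = -a-1" by simp
      finally have zz: "z powr a * z powr (-2*a-1) = z powr (-a-1)" .
      have "?g z * Psi a (M * z / t) = ?h z"
        unfolding ps zz[symmetric] by (simp add: algebra_simps)
      then show ?thesis using True by simp
    next
      case False
      show ?thesis
      proof (cases "1 \<le> z")
        case True
        with False have "z > c" by simp
        then have "1 \<le> \<bar>M * z / t\<bar>" using M t unfolding c_def by (simp add: field_simps)
        then show ?thesis using Psi_ge1[OF a] False by (simp add: indicator_def)
      qed (use False in \<open>simp add: indicator_def\<close>)
    qed
    have "(\<integral>\<^sup>+z. ennreal (?g z * Psi a (M * z / t)) * indicator {1..} z \<partial>lborel)
        = (\<integral>\<^sup>+z. ennreal (?h z) * indicator {1..c} z \<partial>lborel)"
      by (rule nn_integral_cong, rule eq)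
    also have "\<dots> = ?F c - ?F 1"
    proof (rule nn_integral_FTC_Icc)
      show "?h \<in> borel_measurable borel" by measurable
      show "1 \<le> c" using c1 by simp
    next
      fix z :: real assume z: "z \<in> {1..c}"
      then have z0: "0 < z" by simp
      show "(?F has_real_derivative ?h z) (at z)"
        using has_real_derivative_powr[OF z0, of "-2*a"] has_real_derivative_powr[OF z0, of "-a"] z0
        by (auto intro!: derivative_eq_intros simp: field_simps)
      have "M * z / t \<le> 1" using z M t unfolding c_def by (simp add: field_simps)
      then have "(M * z / t) powr a \<le> 1" using powr_le1[of a "M * z / t"] a M t z0 by simp
      moreover have "(M * z / t) powr a = k * z powr a"
        unfolding k_def by (simp add: powr_mult[symmetric] field_simps)
      ultimately have kz: "k * z powr a \<le> 1" by simp
      have "a * k * z powr (-a-1) = a * (k * z powr a) * z powr (-2*a-1)"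
        by (simp only: powr_zz[symmetric] mult.assoc)
      also have "\<dots> \<le> a * 1 * z powr (-2*a-1)"
        using mult_right_mono[OF mult_left_mono[OF kz, of a], of "z powr (-2*a-1)"] a by simp
      finally have "a * k * z powr (-a-1) \<le> a * z powr (-2*a-1)" by simp
      then show "0 \<le> ?h z" by simp
    qed
    also have "?F c - ?F 1 = (1 - k)^2 / 2"
    proof -
      have ck: "c powr (-a) = k" unfolding c_def k_def using M t
        by (simp add: powr_minus_divide powr_divide)
      have ck2: "c powr (-2*a) = k^2"
        using ck powr_add[of c "-a" "-a"] by (simp add: power2_eq_square)
      show ?thesis using ck ck2 by (simp add: power2_eq_square algebra_simps)
    qed
    finally show ?thesis using True unfolding k_def by simp
  qed
  also have "ennreal (if M < t then (1 - (M/t) powr a)^2 / 2 else 0) * 2 = ennreal (if M < t then (1 - (M/t) powr a)^2 else 0)"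
    by (auto simp: ennreal_half2)
  finally show ?thesis .
qed

lemma ennreal_avg: "(x + x) / 2 = (x::ennreal)"
  by (simp add: divide_ennreal_def mult_2_right[symmetric] mult.assoc)

lemma K_psi_real:
  assumes a: "a > 0" and t: "t > 0" and M: "kM x y > 0"
  shows "kr a x y * (if kM x y < t then (1 - (kM x y/t) powr a)^2 else 0) + (1 - kr a x y) * Psi a (kM x y / t)
    = Psi a (x/t) * Psi a (y/t)"
proof (cases "kM x y < t")
  case False
  then have "1 \<le> \<bar>kM x y / t\<bar>" using t M by (simp add: field_simps)
  then have P0: "Psi a (kM x y / t) = 0" using Psi_ge1[OF a] by simp
  have "1 \<le> \<bar>x / t\<bar> \<or> 1 \<le> \<bar>y / t\<bar>" using False t unfolding kM_def
    by (auto simp: field_simps max_def split: if_splits)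
  then have "Psi a (x/t) * Psi a (y/t) = 0" using Psi_ge1[OF a] by auto
  then show ?thesis using False P0 by simp
next
  case True
  let ?M = "kM x y" and ?m = "min \<bar>x\<bar> \<bar>y\<bar>"
  define k where "k = (?M/t) powr a"
  define r where "r = kr a x y"
  have r: "r = (?m / ?M) powr a" unfolding r_def kr_def using M by simp
  have rk: "r * k = (?m / t) powr a"
    unfolding r k_def using M t by (simp add: powr_mult[symmetric])
  have xt: "\<bar>x\<bar> < t" "\<bar>y\<bar> < t" using True unfolding kM_def by auto
  have Px: "Psi a (x/t) = 1 - (\<bar>x\<bar>/t) powr a" using Psi_le[OF a, of "x/t"] xt t by (simp add: abs_divide)
  have Py: "Psi a (y/t) = 1 - (\<bar>y\<bar>/t) powr a" using Psi_le[OF a, of "y/t"] xt t by (simp add: abs_divide)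
  have PM: "Psi a (?M/t) = 1 - k" unfolding k_def using Psi_le[OF a, of "?M/t"] True t M by simp
  have "r * (1 - k)^2 + (1 - r) * (1 - k) = (1 - k) * (1 - r * k)"
    by (simp add: algebra_simps power2_eq_square)
  also have "\<dots> = (1 - k) * (1 - (?m / t) powr a)" by (simp only: rk)
  also have "\<dots> = Psi a (x/t) * Psi a (y/t)"
    unfolding Px Py k_def kM_def by (cases "\<bar>x\<bar> \<le> \<bar>y\<bar>") (auto simp: max_def min_def)
  finally show ?thesis using True PM unfolding r_def k_def by simp
qed

lemma K_psi:
  assumes a: "a > 0" and t: "t > 0"
  shows "(\<integral>\<^sup>+z. ennreal (Psi a (z/t)) \<partial>K a x y) = ennreal (Psi a (x/t) * Psi a (y/t))"
proof -
  let ?M = "kM x y" and ?r = "kr a x y"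
  have r: "0 \<le> ?r" "?r \<le> 1" using kr_bounds[OF a] by auto
  have "(\<integral>\<^sup>+z. ennreal (Psi a (z/t)) \<partial>K a x y) = ennreal ?r * (\<integral>\<^sup>+z. ennreal (Psi a (?M * z / t)) \<partial>sym_pareto a)
     + ennreal (1 - ?r) * ((ennreal (Psi a (?M/t)) + ennreal (Psi a (- ?M/t))) / 2)"
    by (rule nn_integral_K[OF a]) measurable
  also have "(ennreal (Psi a (?M/t)) + ennreal (Psi a (- ?M/t))) / 2 = ennreal (Psi a (?M/t))"
    using ennreal_avg[of "ennreal (Psi a (?M/t))"] by simp
  finally have L: "(\<integral>\<^sup>+z. ennreal (Psi a (z/t)) \<partial>K a x y) = ennreal ?r * (\<integral>\<^sup>+z. ennreal (Psi a (?M * z / t)) \<partial>sym_pareto a)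
     + ennreal (1 - ?r) * ennreal (Psi a (?M/t))" .
  show ?thesis
  proof (cases "?M = 0")
    case True
    then have "x = 0" "y = 0" unfolding kM_def by (auto simp: max_def split: if_splits)
    moreover have "?r = 0" unfolding kr_def using True by simp
    ultimately show ?thesis using L True by (simp add: Psi_zero[OF a])
  next
    case False
    then have M: "?M > 0" using kM_nonneg[of x y] by simp
    have q: "0 \<le> (if ?M < t then (1 - (?M/t) powr a)^2 else 0)" by simp
    have "(\<integral>\<^sup>+z. ennreal (Psi a (z/t)) \<partial>K a x y)
       = ennreal ?r * ennreal (if ?M < t then (1 - (?M/t) powr a)^2 else 0) + ennreal (1 - ?r) * ennreal (Psi a (?M/t))"
      unfolding L pareto_psi[OF a t M] ..
    also have "\<dots> = ennreal (?r * (if ?M < t then (1 - (?M/t) powr a)^2 else 0) + (1 - ?r) * Psi a (?M/t))"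
      using r q Psi_nonneg[of a "?M/t"] by (simp add: ennreal_mult ennreal_plus del: ennreal_eq_0_iff)
    also have "\<dots> = ennreal (Psi a (x/t) * Psi a (y/t))"
      using K_psi_real[OF a t M] by simp
    finally show ?thesis .
  qed
qed

lemma meas_good: "good \<mu> \<Longrightarrow> f \<in> borel_measurable borel \<Longrightarrow> f \<in> borel_measurable \<mu>"
  unfolding good_def using measurable_cong_sets[of \<mu> borel borel borel] by blast

lemma kconv_psi:
  assumes a: "a > 0" and t: "t > 0" and g: "good \<mu>1" "good \<mu>2"
  shows "(\<integral>\<^sup>+z. ennreal (Psi a (z/t)) \<partial>kconv a \<mu>1 \<mu>2)
    = (\<integral>\<^sup>+x. ennreal (Psi a (x/t)) \<partial>\<mu>1) * (\<integral>\<^sup>+y. ennreal (Psi a (y/t)) \<partial>\<mu>2)"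
proof -
  have m2: "(\<lambda>y. ennreal (Psi a (y/t))) \<in> borel_measurable \<mu>2" by (rule meas_good[OF g(2)]) measurable
  have m1: "(\<lambda>y. ennreal (Psi a (y/t))) \<in> borel_measurable \<mu>1" by (rule meas_good[OF g(1)]) measurable
  have "(\<integral>\<^sup>+z. ennreal (Psi a (z/t)) \<partial>kconv a \<mu>1 \<mu>2)
     = (\<integral>\<^sup>+x. \<integral>\<^sup>+y. \<integral>\<^sup>+z. ennreal (Psi a (z/t)) \<partial>K a x y \<partial>\<mu>2 \<partial>\<mu>1)"
    by (rule nn_integral_kconv[OF a g]) measurable
  also have "\<dots> = (\<integral>\<^sup>+x. \<integral>\<^sup>+y. ennreal (Psi a (x/t) * Psi a (y/t)) \<partial>\<mu>2 \<partial>\<mu>1)"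
    by (simp only: K_psi[OF a t])
  also have "\<dots> = (\<integral>\<^sup>+x. ennreal (Psi a (x/t)) * (\<integral>\<^sup>+y. ennreal (Psi a (y/t)) \<partial>\<mu>2) \<partial>\<mu>1)"
  proof (rule nn_integral_cong)
    fix x
    have "(\<integral>\<^sup>+y. ennreal (Psi a (x/t) * Psi a (y/t)) \<partial>\<mu>2) = (\<integral>\<^sup>+y. ennreal (Psi a (x/t)) * ennreal (Psi a (y/t)) \<partial>\<mu>2)"
      by (rule nn_integral_cong) (simp add: ennreal_mult Psi_nonneg)
    also have "\<dots> = ennreal (Psi a (x/t)) * (\<integral>\<^sup>+y. ennreal (Psi a (y/t)) \<partial>\<mu>2)"
      by (rule nn_integral_cmult[OF m2])
    finally show "(\<integral>\<^sup>+y. ennreal (Psi a (x/t) * Psi a (y/t)) \<partial>\<mu>2) = ennreal (Psi a (x/t)) * (\<integral>\<^sup>+y. ennreal (Psi a (y/t)) \<partial>\<mu>2)" .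
  qed
  also have "\<dots> = (\<integral>\<^sup>+x. ennreal (Psi a (x/t)) \<partial>\<mu>1) * (\<integral>\<^sup>+y. ennreal (Psi a (y/t)) \<partial>\<mu>2)"
    by (rule nn_integral_multc[OF m1])
  finally show ?thesis .
qed

lemma kpow_psi:
  assumes a: "a > 0" and t: "t > 0" and g: "good \<nu>"
  shows "(\<integral>\<^sup>+z. ennreal (Psi a (z/t)) \<partial>kpow a \<nu> n) = (\<integral>\<^sup>+y. ennreal (Psi a (y/t)) \<partial>\<nu>) ^ n"
proof (induction n)
  case 0
  then show ?case by (simp add: tdelta_T nn_integral_T Psi_zero[OF a])
next
  case (Suc n)
  have "kpow a \<nu> (Suc n) = kconv a (kpow a \<nu> n) \<nu>" by simp
  then have "(\<integral>\<^sup>+z. ennreal (Psi a (z/t)) \<partial>kpow a \<nu> (Suc n))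
     = (\<integral>\<^sup>+z. ennreal (Psi a (z/t)) \<partial>kpow a \<nu> n) * (\<integral>\<^sup>+y. ennreal (Psi a (y/t)) \<partial>\<nu>)"
    using kconv_psi[OF a t good_kpow[OF a g] g] by (simp only:)
  then show ?case unfolding Suc.IH by (simp only: power_Suc2)
qed

lemma pareto_0t:
  assumes a: "a > 0" and t: "t > 0" and M: "M > 0"
  shows "(\<integral>\<^sup>+z. indicator {0<..<t} (M * z) \<partial>sym_pareto a)
     = ennreal (if M < t then (1 - ((M/t) powr a)^2) / 2 else 0)"
proof -
  let ?g = "\<lambda>z. a * z powr (-2*a-1)"
  have "(\<integral>\<^sup>+z. indicator {0<..<t} (M * z) \<partial>sym_pareto a)
      = (\<integral>\<^sup>+z. ennreal (?g z) * indicator {1..} z * (indicator {0<..<t} (M * z) + indicator {0<..<t} (M * (-z))) \<partial>lborel)"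
    by (rule nn_integral_pareto) measurable
  also have "\<dots> = (\<integral>\<^sup>+z. ennreal (?g z) * indicator {1..<t/M} z \<partial>lborel)"
  proof (intro nn_integral_cong)
    fix z :: real
    show "ennreal (?g z) * indicator {1..} z * (indicator {0<..<t} (M * z) + indicator {0<..<t} (M * (-z)))
       = ennreal (?g z) * indicator {1..<t/M} z"
    proof (cases "1 \<le> z")
      case True
      then have Mz: "0 < M * z" using M by (intro mult_pos_pos) auto
      then have "\<not> 0 < M * (-z)" by simp
      have e1: "indicator {0<..<t} (M * (-z)) = (0::ennreal)" using Mz by (simp add: indicator_def)
      have e2: "(M * z < t) = (z < t / M)" using M by (simp add: field_simps)
      show ?thesis using True Mz e1 e2 by (simp add: indicator_def)
    qed (simp add: indicator_def)
  qed
  also have "\<dots> = ennreal (if M < t then (1 - ((M/t) powr a)^2) / 2 else 0)"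
  proof (cases "M < t")
    case False
    then have "t / M \<le> 1" using M by (simp add: field_simps)
    then have "indicator {1..<t/M} z = (0::ennreal)" for z :: real by (simp add: indicator_def)
    then show ?thesis using False by simp
  next
    case True
    define c where "c = t / M"
    have c1: "1 < c" using True M unfolding c_def by simp
    let ?F = "\<lambda>z. - (z powr (-2*a) / 2)"
    have "(\<integral>\<^sup>+z. ennreal (?g z) * indicator {1..<t/M} z \<partial>lborel) = (\<integral>\<^sup>+z. ennreal (?g z) * indicator {1..c} z \<partial>lborel)"
      unfolding c_def
      by (intro nn_integral_cong_AE, use AE_lborel_singleton[of "t/M"] in eventually_elim)
         (auto simp: indicator_def)
    also have "\<dots> = ?F c - ?F 1"
    proof (rule nn_integral_FTC_Icc)
      show "?g \<in> borel_measurable borel" by measurable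
      show "1 \<le> c" using c1 by simp
    next
      fix z :: real assume z: "z \<in> {1..c}"
      then have z0: "0 < z" by simp
      show "(?F has_real_derivative ?g z) (at z)"
        using has_real_derivative_powr[OF z0, of "-2*a"] z0
        by (auto intro!: derivative_eq_intros simp: field_simps)
      show "0 \<le> ?g z" using a by simp
    qed
    also have "?F c - ?F 1 = (1 - ((M/t) powr a)^2) / 2"
    proof -
      have ck: "c powr (-a) = (M/t) powr a" unfolding c_def using M t
        by (simp add: powr_minus_divide powr_divide)
      have ck2: "c powr (-2*a) = ((M/t) powr a)^2"
        using ck powr_add[of c "-a" "-a"] by (simp add: power2_eq_square)
      show ?thesis using ck2 by simp
    qed
    finally show ?thesis using True by simp
  qed
  finally show ?thesis .
qed

definition Bfun :: "real \<Rightarrow> real \<Rightarrow> real \<Rightarrow> real \<Rightarrow> real" where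
  "Bfun a t x y = (if \<bar>x\<bar> < t \<and> \<bar>y\<bar> < t \<and> (x \<noteq> 0 \<or> y \<noteq> 0)
      then (1 - (\<bar>x\<bar>/t) powr a * (\<bar>y\<bar>/t) powr a) / 2 else 0)"

lemma K_0t:
  assumes a: "a > 0" and t: "t > 0"
  shows "emeasure (K a x y) {0<..<t} = ennreal (Bfun a t x y)"
proof -
  let ?M = "kM x y" and ?r = "kr a x y"
  have r: "0 \<le> ?r" "?r \<le> 1" using kr_bounds[OF a] by auto
  have "emeasure (K a x y) {0<..<t} = (\<integral>\<^sup>+z. indicator {0<..<t} z \<partial>K a x y)"
    using sets_K[OF a] by (subst nn_integral_indicator) auto
  also have "\<dots> = ennreal ?r * (\<integral>\<^sup>+z. indicator {0<..<t} (?M * z) \<partial>sym_pareto a)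
     + ennreal (1 - ?r) * ((indicator {0<..<t} ?M + indicator {0<..<t} (- ?M)) / 2)"
    by (rule nn_integral_K[OF a]) measurable
  finally have L: "emeasure (K a x y) {0<..<t} = ennreal ?r * (\<integral>\<^sup>+z. indicator {0<..<t} (?M * z) \<partial>sym_pareto a)
     + ennreal (1 - ?r) * ((indicator {0<..<t} ?M + indicator {0<..<t} (- ?M)) / 2)" .
  show ?thesis
  proof (cases "?M = 0")
    case True
    then have "x = 0" "y = 0" unfolding kM_def by (auto simp: max_def split: if_splits)
    moreover have "?r = 0" unfolding kr_def using True by simp
    ultimately show ?thesis using L True by (simp add: Bfun_def)
  next
    case False
    then have M: "?M > 0" using kM_nonneg[of x y] by simp
    have i2: "(indicator {0<..<t} ?M + indicator {0<..<t} (- ?M)) / 2 = ennreal (if ?M < t then 1/2 else 0)"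
      using M divide_ennreal[of 1 2] by (auto simp: indicator_def)
    show ?thesis
    proof (cases "?M < t")
      case False
      have "\<not> (\<bar>x\<bar> < t \<and> \<bar>y\<bar> < t)" using False unfolding kM_def by auto
      then have "Bfun a t x y = 0" by (auto simp: Bfun_def)
      then show ?thesis using L False i2 pareto_0t[OF a t M] by simp
    next
      case True
      define k where "k = (?M/t) powr a"
      let ?m = "min \<bar>x\<bar> \<bar>y\<bar>"
      have rr: "?r = (?m / ?M) powr a" unfolding kr_def using M by simp
      have rk: "?r * k = (?m / t) powr a"
        unfolding rr k_def using M t by (simp add: powr_mult[symmetric])
      have xt: "\<bar>x\<bar> < t" "\<bar>y\<bar> < t" "x \<noteq> 0 \<or> y \<noteq> 0" using True False unfolding kM_def by auto
      have q: "0 \<le> (1 - k^2) / 2"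
      proof -
        have "k \<le> 1" unfolding k_def using powr_le1[of a "?M/t"] a M t True by simp
        moreover have "0 \<le> k" unfolding k_def by simp
        ultimately have "k^2 \<le> 1" by (simp add: power_le_one)
        then show ?thesis by simp
      qed
      have "emeasure (K a x y) {0<..<t} = ennreal ?r * ennreal ((1 - k^2) / 2) + ennreal (1 - ?r) * ennreal (1/2)"
        using L True i2 pareto_0t[OF a t M] unfolding k_def by simp
      also have "\<dots> = ennreal (?r * ((1 - k^2) / 2) + (1 - ?r) * (1/2))"
      proof -
        have e1: "ennreal ?r * ennreal ((1 - k^2) / 2) = ennreal (?r * ((1 - k^2) / 2))"
          by (rule ennreal_mult[symmetric]) (use r q in auto)
        have e2: "ennreal (1 - ?r) * ennreal (1/2) = ennreal ((1 - ?r) * (1/2))"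
          by (rule ennreal_mult[symmetric]) (use r in auto)
        have e3: "ennreal (?r * ((1 - k^2) / 2)) + ennreal ((1 - ?r) * (1/2)) = ennreal (?r * ((1 - k^2) / 2) + (1 - ?r) * (1/2))"
          by (rule ennreal_plus[symmetric]) (use r q in auto)
        show ?thesis by (simp only: e1 e2 e3)
      qed
      also have "?r * ((1 - k^2) / 2) + (1 - ?r) * (1/2) = (1 - (?r * k) * k) / 2"
        by (simp add: field_simps power2_eq_square)
      also have "\<dots> = (1 - (?m / t) powr a * k) / 2" by (simp only: rk)
      also have "\<dots> = Bfun a t x y"
        unfolding Bfun_def k_def kM_def using xt by (cases "\<bar>x\<bar> \<le> \<bar>y\<bar>") (auto simp: max_def min_def mult.commute)
      finally show ?thesis .
    qed
  qed
qed

lemma cdf_sym: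
  assumes g: "good \<mu>" and sy: "symm \<mu>" and t: "t > 0"
    and nt: "emeasure \<mu> {t} = 0" and nmt: "emeasure \<mu> {-t} = 0"
  shows "2 * measure \<mu> {..t} - 1 = measure \<mu> {-t<..<t}"
proof -
  interpret P: prob_space \<mu> using g by (simp add: good_def)
  have sets: "sets \<mu> = sets borel" using g by (simp add: good_def)
  have sp: "space \<mu> = UNIV" using g by (rule space_good)
  have "emeasure \<mu> {..<-t} = (\<integral>\<^sup>+z. indicator {..<-t} z \<partial>\<mu>)"
    using sets by (subst nn_integral_indicator) auto
  also have "\<dots> = (\<integral>\<^sup>+z. indicator {t<..} (-z) \<partial>\<mu>)"
    by (intro nn_integral_cong) (auto simp: indicator_def)
  also have "\<dots> = (\<integral>\<^sup>+z. indicator {t<..} z \<partial>\<mu>)"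
    using sy unfolding symm_def by (metis borel_measurable_indicator_iff measurable_ident_sets sets_lborel measurable_lborel1 sets.top sets_borel_eq_count_space borel_measurable_indicator atLeastAtMost_borel greaterThan_borel)
  also have "\<dots> = emeasure \<mu> {t<..}"
    using sets by (subst nn_integral_indicator) auto
  finally have S: "measure \<mu> {..<-t} = measure \<mu> {t<..}" by (simp add: measure_def)
  have a1: "measure \<mu> {t} = 0" "measure \<mu> {-t} = 0" using nt nmt by (simp_all add: measure_def)
  have eq: "{..t} = {..<-t} \<union> ({-t} \<union> ({-t<..<t} \<union> {t}))" using t by auto
  have m1: "measure \<mu> ({-t<..<t} \<union> {t}) = measure \<mu> {-t<..<t} + measure \<mu> {t}"
    by (rule P.finite_measure_Union) (auto simp: sets)
  have m2: "measure \<mu> ({-t} \<union> ({-t<..<t} \<union> {t})) = measure \<mu> {-t} + measure \<mu> ({-t<..<t} \<union> {t})"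
    by (rule P.finite_measure_Union) (use t in \<open>auto simp: sets\<close>)
  have m3: "measure \<mu> ({..<-t} \<union> ({-t} \<union> ({-t<..<t} \<union> {t}))) = measure \<mu> {..<-t} + measure \<mu> ({-t} \<union> ({-t<..<t} \<union> {t}))"
    by (rule P.finite_measure_Union) (use t in \<open>auto simp: sets\<close>)
  have "measure \<mu> {..t} = measure \<mu> {..<-t} + (measure \<mu> {-t} + (measure \<mu> {-t<..<t} + measure \<mu> {t}))"
    unfolding eq m3 m2 m1 ..
  then have F: "measure \<mu> {..t} = measure \<mu> {..<-t} + measure \<mu> {-t<..<t}" using a1 by simp
  have "UNIV = {..t} \<union> {t<..}" by auto
  moreover have "measure \<mu> ({..t} \<union> {t<..}) = measure \<mu> {..t} + measure \<mu> {t<..}"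
    by (rule P.finite_measure_Union) (auto simp: sets)
  ultimately have "measure \<mu> UNIV = measure \<mu> {..t} + measure \<mu> {t<..}" by simp
  moreover have "measure \<mu> UNIV = 1" using P.prob_space sp by simp
  ultimately show ?thesis using F S by simp
qed

lemma Bfun_measurable[measurable]: "(\<lambda>p. Bfun a t (fst p) (snd p)) \<in> borel_measurable (borel \<Otimes>\<^sub>M borel)"
  unfolding Bfun_def by measurable

lemma main_meas:
  assumes a: "a > 0" and t: "t > 0" and g: "good \<mu>" and sy: "symm \<mu>"
    and n0: "emeasure \<mu> {0} = 0" and nt: "emeasure \<mu> {t} = 0" and nmt: "emeasure \<mu> {-t} = 0"
  shows "measure (kconv a (tdelta x) \<mu>) {0<..<t}
    = (1/2) * (Psi a (x/t) * (2 * Fdist \<mu> t - 1 - (\<integral>y. Psi a (y/t) \<partial>\<mu>)) + (\<integral>y. Psi a (y/t) \<partial>\<mu>))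
      * indicator {y. \<bar>y\<bar> < t} x"
proof -
  interpret P: prob_space \<mu> using g by (simp add: good_def)
  have sets: "sets \<mu> = sets borel" using g by (simp add: good_def)
  have sp2: "sets (borel \<Otimes>\<^sub>M \<mu>) = sets (borel \<Otimes>\<^sub>M borel)"
    using sets by (intro sets_pair_measure_cong) auto
  have mB: "(\<lambda>p. ennreal (Bfun a t (fst p) (snd p))) \<in> borel_measurable (borel \<Otimes>\<^sub>M \<mu>)"
  proof -
    have "(\<lambda>p. ennreal (Bfun a t (fst p) (snd p))) \<in> borel_measurable (borel \<Otimes>\<^sub>M borel)" by measurable
    then show ?thesis using measurable_cong_sets[OF sp2 refl] by blast
  qed
  have mphi: "(\<lambda>x'. \<integral>\<^sup>+y. ennreal (Bfun a t x' y) \<partial>\<mu>) \<in> borel_measurable borel"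
    using P.borel_measurable_nn_integral[of "\<lambda>x' y. ennreal (Bfun a t x' y)" borel] mB by simp
  have Bsym: "Bfun a t (-x) y = Bfun a t x y" for y by (simp add: Bfun_def)
  have "emeasure (kconv a (tdelta x) \<mu>) {0<..<t} = (\<integral>\<^sup>+x'. \<integral>\<^sup>+y. emeasure (K a x' y) {0<..<t} \<partial>\<mu> \<partial>T x)"
    unfolding tdelta_T by (rule emeasure_kconv[OF a good_T g]) simp
  also have "\<dots> = (\<integral>\<^sup>+x'. \<integral>\<^sup>+y. ennreal (Bfun a t x' y) \<partial>\<mu> \<partial>T x)"
    by (simp only: K_0t[OF a t])
  also have "\<dots> = ((\<integral>\<^sup>+y. ennreal (Bfun a t x y) \<partial>\<mu>) + (\<integral>\<^sup>+y. ennreal (Bfun a t (-x) y) \<partial>\<mu>)) / 2"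
    by (rule nn_integral_T[OF mphi])
  also have "\<dots> = (\<integral>\<^sup>+y. ennreal (Bfun a t x y) \<partial>\<mu>)"
    unfolding Bsym by (rule ennreal_avg)
  finally have E: "emeasure (kconv a (tdelta x) \<mu>) {0<..<t} = (\<integral>\<^sup>+y. ennreal (Bfun a t x y) \<partial>\<mu>)" .
  show ?thesis
  proof (cases "\<bar>x\<bar> < t")
    case False
    then have "Bfun a t x y = 0" for y by (simp add: Bfun_def)
    then have "emeasure (kconv a (tdelta x) \<mu>) {0<..<t} = 0" using E by simp
    then show ?thesis using False by (simp add: measure_def)
  next
    case True
    define A where "A = (\<bar>x\<bar>/t) powr a"
    have A1: "A \<le> 1" "0 \<le> A" unfolding A_def using powr_le1[of a "\<bar>x\<bar>/t"] a t True by auto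
    have Px: "Psi a (x/t) = 1 - A" unfolding A_def using Psi_le[OF a, of "x/t"] True t by (simp add: abs_divide)
    define R where "R y = (1/2) * ((1 - A) * indicator {-t<..<t} y + A * Psi a (y/t))" for y
    have R0: "0 \<le> R y" for y unfolding R_def using A1 Psi_nonneg[of a "y/t"] by simp
    have mR: "R \<in> borel_measurable \<mu>" unfolding R_def by (rule meas_good[OF g]) measurable
    have ae0: "AE y in \<mu>. y \<notin> {0}"
      using n0 sets by (intro AE_not_in) (auto simp: null_sets_def)
    have "(\<integral>\<^sup>+y. ennreal (Bfun a t x y) \<partial>\<mu>) = (\<integral>\<^sup>+y. ennreal (R y) \<partial>\<mu>)"
    proof (rule nn_integral_cong_AE)
      show "AE y in \<mu>. ennreal (Bfun a t x y) = ennreal (R y)"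
        using ae0
      proof eventually_elim
        case (elim y)
        show ?case
        proof (cases "\<bar>y\<bar> < t")
          case True': True
          have Py: "Psi a (y/t) = 1 - (\<bar>y\<bar>/t) powr a"
            using Psi_le[OF a, of "y/t"] True' t by (simp add: abs_divide)
          have ind1: "indicator {-t<..<t} y = (1::real)" using True' by (auto simp: indicator_def)
          have "Bfun a t x y = R y"
            using True True' elim unfolding Bfun_def R_def Py A_def ind1
            by (simp add: field_simps)
          then show ?thesis by simp
        next
          case False
          have "Psi a (y/t) = 0" using Psi_ge1[OF a, of "y/t"] False t by (simp add: abs_divide)
          moreover have "indicator {-t<..<t} y = (0::real)" using False by (auto simp: indicator_def)
          ultimately have "R y = 0" unfolding R_def by simp
          then show ?thesis using False by (simp add: Bfun_def)
        qed
      qed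
    qed
    then have E2: "emeasure (kconv a (tdelta x) \<mu>) {0<..<t} = (\<integral>\<^sup>+y. ennreal (R y) \<partial>\<mu>)" using E by simp
    have "measure (kconv a (tdelta x) \<mu>) {0<..<t} = (\<integral>y. R y \<partial>\<mu>)"
      unfolding measure_def E2 by (rule integral_eq_nn_integral[symmetric]) (use mR R0 in auto)
    also have "(\<integral>y. R y \<partial>\<mu>) = (1/2) * ((1 - A) * measure \<mu> {-t<..<t} + A * (\<integral>y. Psi a (y/t) \<partial>\<mu>))"
    proof -
      have i1: "integrable \<mu> (indicator {-t<..<t} :: real \<Rightarrow> real)"
        using sets by (intro integrable_real_indicator) (auto simp: P.emeasure_eq_measure)
      have i2: "integrable \<mu> (\<lambda>y. Psi a (y/t))"
        by (rule P.integrable_const_bound[where B=1]) (use a Psi_nonneg Psi_le1 in \<open>auto intro!: meas_good[OF g]\<close>)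
      show ?thesis unfolding R_def
        using i1 i2 by (simp add: space_good[OF g])
    qed
    also have "measure \<mu> {-t<..<t} = 2 * Fdist \<mu> t - 1"
      using cdf_sym[OF g sy t nt nmt] by (simp add: Fdist_def)
    finally have X: "measure (kconv a (tdelta x) \<mu>) {0<..<t} = (1/2) * ((1 - A) * (2 * Fdist \<mu> t - 1) + A * (\<integral>y. Psi a (y/t) \<partial>\<mu>))" .
    show ?thesis unfolding Px X using True by (simp add: algebra_simps)
  qed
qed

lemma null_pair:
  assumes g: "good \<mu>" and "emeasure \<mu> {s} = 0" "emeasure \<mu> {-s} = 0"
  shows "emeasure \<mu> {s, -s} = 0" "emeasure \<mu> {-s, - (-s)} = 0"
proof -
  have sets: "sets \<mu> = sets borel" using g by (simp add: good_def)
  have "emeasure \<mu> ({s} \<union> {-s}) \<le> emeasure \<mu> {s} + emeasure \<mu> {-s}"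
    by (rule emeasure_subadditive) (auto simp: sets)
  also have "\<dots> = 0" using assms by simp
  finally have le: "emeasure \<mu> ({s} \<union> {-s}) \<le> 0" .
  have eq: "{s} \<union> {-s} = {s, -s}" by auto
  have "emeasure \<mu> {s, -s} = 0" using le unfolding eq by simp
  moreover have "{-s, - (-s)} = {s, -s}" by auto
  ultimately show "emeasure \<mu> {s, -s} = 0" "emeasure \<mu> {-s, - (-s)} = 0" by simp_all
qed

lemma kpow_atoms:
  assumes a: "a > 0" and g: "good \<nu>" and s: "s \<noteq> 0"
    and n1: "emeasure \<nu> {s} = 0" and n2: "emeasure \<nu> {-s} = 0"
  shows "emeasure (kpow a \<nu> n) {s} = 0 \<and> emeasure (kpow a \<nu> n) {-s} = 0"
proof (induction n)
  case 0
  then show ?case using s by (simp add: tdelta_T emeasure_T)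
next
  case (Suc n)
  note gk = good_kpow[OF a g, of n]
  have A: "emeasure (kpow a \<nu> n) {s, -s} = 0" "emeasure (kpow a \<nu> n) {-s, - (-s)} = 0"
    using null_pair[OF gk] Suc.IH by auto
  have B: "emeasure \<nu> {s, -s} = 0" "emeasure \<nu> {-s, - (-s)} = 0"
    using null_pair[OF g n1 n2] by auto
  show ?case using kconv_atom[OF a gk g A(1) B(1)] kconv_atom[OF a gk g A(2) B(2)] by simp
qed

lemma enn2real_power': "enn2real (x ^ n) = enn2real x ^ n"
  by (induction n) (simp_all add: enn2real_mult)

theorem lemma2p2:
  fixes \<alpha> :: real and \<nu> :: "real measure" and n :: nat and x t :: real
  assumes "\<alpha> > 0" and "sym_prob \<nu>" and "measure \<nu> {0} = 0"
    and "n \<ge> 1" and "t > 0" and "measure \<nu> {t} = 0"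
  shows "measure (kconv \<alpha> (tdelta x) (kpow \<alpha> \<nu> n)) {0<..<t}
           = (1/2) * (Psi \<alpha> (x / t) * Hfun \<alpha> \<nu> n t + Gfun \<alpha> \<nu> t ^ n)
             * indicator {y. \<bar>y\<bar> < t} x
       \<and> kendall_trans \<alpha> \<nu> n x {0<..<t}
           = (1/2) * (Psi \<alpha> (x / t) * Hfun \<alpha> \<nu> n t + Gfun \<alpha> \<nu> t ^ n)
             * indicator {y. \<bar>y\<bar> < t} x"
proof -
  note a = assms(1) and t = assms(5)
  have sp: "prob_space \<nu>" and sets: "sets \<nu> = sets borel"
    and sym: "\<And>A. A \<in> sets borel \<Longrightarrow> emeasure \<nu> (uminus ` A) = emeasure \<nu> A"
    using assms(2) unfolding sym_prob_def by auto
  interpret P: prob_space \<nu> by (rule sp)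
  have g: "good \<nu>" using sp sets by (simp add: good_def)
  have n0: "emeasure \<nu> {0} = 0" using assms(3) sets by (simp add: P.emeasure_eq_measure)
  have nt: "emeasure \<nu> {t} = 0" using assms(6) sets by (simp add: P.emeasure_eq_measure)
  have nmt: "emeasure \<nu> {-t} = 0" using sym[of "{t}"] nt by simp
  define \<mu> where "\<mu> = kpow \<alpha> \<nu> n"
  have gm: "good \<mu>" unfolding \<mu>_def by (rule good_kpow[OF a g])
  have sm: "symm \<mu>" unfolding \<mu>_def by (rule symm_kpow[OF a g])
  obtain m where nm: "n = Suc m" using assms(4) by (cases n) auto
  have m0: "emeasure \<mu> {0} = 0" unfolding \<mu>_def nm
    using kconv_atom0[OF a good_kpow[OF a g] g n0] by simp
  have mt: "emeasure \<mu> {t} = 0" "emeasure \<mu> {-t} = 0"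
    unfolding \<mu>_def using kpow_atoms[OF a g _ nt nmt, of n] t by auto
  have G: "(\<integral>y. Psi \<alpha> (y/t) \<partial>\<mu>) = Gfun \<alpha> \<nu> t ^ n"
  proof -
    have "(\<integral>y. Psi \<alpha> (y/t) \<partial>\<mu>) = enn2real (\<integral>\<^sup>+y. ennreal (Psi \<alpha> (y/t)) \<partial>\<mu>)"
      by (rule integral_eq_nn_integral) (auto intro!: meas_good[OF gm] simp: Psi_nonneg)
    also have "\<dots> = enn2real ((\<integral>\<^sup>+y. ennreal (Psi \<alpha> (y/t)) \<partial>\<nu>) ^ n)"
      unfolding \<mu>_def by (simp only: kpow_psi[OF a t g])
    also have "\<dots> = enn2real (\<integral>\<^sup>+y. ennreal (Psi \<alpha> (y/t)) \<partial>\<nu>) ^ n" by (rule enn2real_power')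
    also have "enn2real (\<integral>\<^sup>+y. ennreal (Psi \<alpha> (y/t)) \<partial>\<nu>) = Gfun \<alpha> \<nu> t"
      unfolding Gfun_def
      by (rule integral_eq_nn_integral[symmetric]) (auto intro!: meas_good[OF g] simp: Psi_nonneg)
    finally show ?thesis .
  qed
  have G2: "(\<integral>y. Psi \<alpha> (y/t) \<partial>kpow \<alpha> \<nu> n) = Gfun \<alpha> \<nu> t ^ n" using G unfolding \<mu>_def .
  have main: "measure (kconv \<alpha> (tdelta x) (kpow \<alpha> \<nu> n)) {0<..<t}
           = (1/2) * (Psi \<alpha> (x / t) * Hfun \<alpha> \<nu> n t + Gfun \<alpha> \<nu> t ^ n)
             * indicator {y. \<bar>y\<bar> < t} x"
    using main_meas[OF a t gm sm m0 mt] unfolding \<mu>_def G2 Hfun_def .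
  then show ?thesis unfolding kendall_trans_def by simp
qed

end
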